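(* Let $n\ge1$ and $\gamma\in PSL(n+1,\mathbb{C})$. Then there exists $h\in PSL(n+1,\mathbb{C})$ with $h^{-1}\gamma h(T(r))=T(r)$ for all $r>0$, where $T(r)=\{[z_1:\dots:z_{n+1}]:\sum_{j=1}^n|z_j|^2=r|z_{n+1}|^2\}$, if and only if $\gamma$ is conjugate in $PSL(n+1,\mathbb{C})$ to an elliptic element of $PU(n,1)$.
   Context: $PU(n,1)$ is the image in $PSL(n+1,\mathbb{C})$ of the group of matrices preserving the Hermitian form $\sum_{j=1}^n z_j\bar w_j-z_{n+1}\bar w_{n+1}$; it preserves the complex hyperbolic ball $B=\{[z]\in\mathbb{P}^n_{\mathbb{C}}:\sum_{j=1}^n|z_j|^2<|z_{n+1}|^2\}$, and an element of $PU(n,1)$ is elliptic if it has a fixed point in $B$. *)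

theory Defs
  imports "HOL-Analysis.Analysis" "Jordan_Normal_Form.Determinant"
begin

text \<open>Matrices representing elements of PSL(n+1,C): (n+1)x(n+1) complex matrices of
determinant 1 (an element of PSL is such a matrix up to sign; all notions below are
invariant under rescaling). Coordinates z_1..z_(n+1) are indices 0..n; z_(n+1) is index n.
Points of complex projective space are represented by nonzero vectors in C^(n+1).\<close>

definition SL_mat :: "nat \<Rightarrow> complex mat set" where
  "SL_mat m = {A. A \<in> carrier_mat m m \<and> det A = 1}"

definition is_inverse :: "complex mat \<Rightarrow> complex mat \<Rightarrow> bool" where
  "is_inverse A B \<longleftrightarrow> A * B = 1\<^sub>m (dim_row A) \<and> B * A = 1\<^sub>m (dim_row A)"

definition hnorm_first :: "nat \<Rightarrow> complex vec \<Rightarrow> real" where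
  "hnorm_first n z = (\<Sum>j<n. (cmod (z $ j))\<^sup>2)"

definition Tset :: "nat \<Rightarrow> real \<Rightarrow> complex vec set" where
  "Tset n r = {z. z \<in> carrier_vec (n+1) \<and> z \<noteq> 0\<^sub>v (n+1) \<and>
                  hnorm_first n z = r * (cmod (z $ n))\<^sup>2}"

definition ball_B :: "nat \<Rightarrow> complex vec set" where
  "ball_B n = {z. z \<in> carrier_vec (n+1) \<and> z \<noteq> 0\<^sub>v (n+1) \<and>
                  hnorm_first n z < (cmod (z $ n))\<^sup>2}"

definition mat_image :: "complex mat \<Rightarrow> complex vec set \<Rightarrow> complex vec set" where
  "mat_image A S = (\<lambda>z. A *\<^sub>v z) ` S"

definition J_form :: "nat \<Rightarrow> complex mat" where
  "J_form n = mat (n+1) (n+1) (\<lambda>(i,j). if i = j then (if i < n then 1 else -1) else 0)"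

definition conj_transpose :: "complex mat \<Rightarrow> complex mat" where
  "conj_transpose A = transpose_mat (map_mat cnj A)"

definition U_n1 :: "nat \<Rightarrow> complex mat set" where
  "U_n1 n = {A. A \<in> carrier_mat (n+1) (n+1) \<and> conj_transpose A * J_form n * A = J_form n}"

text \<open>the projective class of M lies in PU(n,1) and is elliptic (fixes a point of B)\<close>
definition elliptic_PU :: "nat \<Rightarrow> complex mat \<Rightarrow> bool" where
  "elliptic_PU n M \<longleftrightarrow> (\<exists>A c. A \<in> U_n1 n \<and> c \<noteq> 0 \<and> M = c \<cdot>\<^sub>m A \<and>
      (\<exists>z \<in> ball_B n. \<exists>e. e \<noteq> 0 \<and> A *\<^sub>v z = e \<cdot>\<^sub>v z))"

end

theory Submission imports Defs "HOL-Computational_Algebra.Polynomial" begin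

abbreviation sg :: "nat \<Rightarrow> nat \<Rightarrow> complex" where
  "sg n i \<equiv> (if i < n then 1 else -1)"

lemma ct_carrier[simp]: "A \<in> carrier_mat a b \<Longrightarrow> conj_transpose A \<in> carrier_mat b a"
  unfolding conj_transpose_def by auto

lemma ct_index[simp]: "A \<in> carrier_mat a b \<Longrightarrow> i < b \<Longrightarrow> j < a \<Longrightarrow>
   conj_transpose A $$ (i,j) = cnj (A $$ (j,i))"
  unfolding conj_transpose_def by auto

lemma ct_dims[simp]: "dim_row (conj_transpose A) = dim_col A" "dim_col (conj_transpose A) = dim_row A"
  unfolding conj_transpose_def by auto

lemma J_dims[simp]: "dim_row (J_form n) = n+1" "dim_col (J_form n) = n+1"
  unfolding J_form_def by auto

lemma J_carrier[simp]: "J_form n \<in> carrier_mat (n+1) (n+1)"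
  unfolding J_form_def by auto

lemma J_carrier'[simp]: "J_form n \<in> carrier_mat (Suc n) (Suc n)"
  unfolding J_form_def by auto

lemma J_index: "i < n+1 \<Longrightarrow> j < n+1 \<Longrightarrow> J_form n $$ (i,j) = (if i = j then sg n i else 0)"
  unfolding J_form_def by auto

lemma ctJ_index:
  assumes A: "A \<in> carrier_mat (n+1) (n+1)" and j: "j < n+1" and l: "l < n+1"
  shows "(conj_transpose A * J_form n) $$ (j,l) = cnj (A $$ (l,j)) * sg n l"
proof -
  have "(conj_transpose A * J_form n) $$ (j,l) = (\<Sum>i<n+1. conj_transpose A $$ (j,i) * J_form n $$ (i,l))"
    using A j l by (subst index_mult_mat, auto simp: scalar_prod_def atLeast0LessThan carrier_matD[OF A] simp del: sum.lessThan_Suc)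
  also have "\<dots> = (\<Sum>i<n+1. cnj (A $$ (i,j)) * (if i = l then sg n i else 0))"
    using A j l by (intro sum.cong, auto simp: J_index simp del: sum.lessThan_Suc)
  also have "\<dots> = (\<Sum>i<n+1. if i = l then cnj (A $$ (i,j)) * sg n i else 0)"
    by (rule sum.cong) auto
  also have "\<dots> = cnj (A $$ (l,j)) * sg n l" using l by (simp only: sum.delta finite_lessThan) simp
  finally show ?thesis .
qed

lemma U_entry:
  assumes A: "A \<in> carrier_mat (n+1) (n+1)" and j: "j < n+1" and k: "k < n+1"
  shows "(conj_transpose A * J_form n * A) $$ (j,k) = (\<Sum>i<n+1. cnj (A $$ (i,j)) * sg n i * A $$ (i,k))"
proof -
  have "(conj_transpose A * J_form n * A) $$ (j,k) = (\<Sum>i<n+1. (conj_transpose A * J_form n) $$ (j,i) * A $$ (i,k))"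
    using A j k by (subst index_mult_mat, auto simp: scalar_prod_def atLeast0LessThan carrier_matD[OF A] simp del: sum.lessThan_Suc)
  also have "\<dots> = (\<Sum>i<n+1. cnj (A $$ (i,j)) * sg n i * A $$ (i,k))"
    by (rule sum.cong, simp, subst ctJ_index[OF A j], auto)
  finally show ?thesis .
qed

lemma U_iff:
  assumes A: "A \<in> carrier_mat (n+1) (n+1)"
  shows "A \<in> U_n1 n \<longleftrightarrow> (\<forall>j<n+1. \<forall>k<n+1. (\<Sum>i<n+1. cnj (A $$ (i,j)) * sg n i * A $$ (i,k))
     = (if j = k then sg n j else 0))"
proof
  assume "A \<in> U_n1 n"
  hence e: "conj_transpose A * J_form n * A = J_form n" unfolding U_n1_def by auto
  show "\<forall>j<n+1. \<forall>k<n+1. (\<Sum>i<n+1. cnj (A $$ (i,j)) * sg n i * A $$ (i,k)) = (if j = k then sg n j else 0)"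
  proof (intro allI impI)
    fix j k assume j': "j < n+1" and k': "k < n+1"
    have "(conj_transpose A * J_form n * A) $$ (j,k) = J_form n $$ (j,k)" using e by simp
    thus "(\<Sum>i<n+1. cnj (A $$ (i,j)) * sg n i * A $$ (i,k)) = (if j = k then sg n j else 0)"
      unfolding U_entry[OF A j' k'] J_index[OF j' k'] .
  qed
next
  assume h: "\<forall>j<n+1. \<forall>k<n+1. (\<Sum>i<n+1. cnj (A $$ (i,j)) * sg n i * A $$ (i,k)) = (if j = k then sg n j else 0)"
  have "conj_transpose A * J_form n * A = J_form n"
  proof (rule eq_matI)
    fix j k assume j: "j < dim_row (J_form n)" and k: "k < dim_col (J_form n)"
    hence j': "j < n+1" and k': "k < n+1" by auto
    show "(conj_transpose A * J_form n * A) $$ (j,k) = J_form n $$ (j,k)"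
      unfolding U_entry[OF A j' k'] J_index[OF j' k'] by (rule h[rule_format, OF j' k'])
  qed (use A in auto)
  thus "A \<in> U_n1 n" using A unfolding U_n1_def by blast
qed

lemma mv_index:
  fixes M :: "complex mat"
  assumes M: "M \<in> carrier_mat a b" and z: "z \<in> carrier_vec b" and i: "i < a"
  shows "(M *\<^sub>v z) $ i = (\<Sum>l<b. M $$ (i,l) * z $ l)"
  using M z i by (auto simp: scalar_prod_def atLeast0LessThan)

lemma mv_unit:
  fixes M :: "complex mat"
  assumes M: "M \<in> carrier_mat a b" and i: "i < a" and k: "k < b"
  shows "(M *\<^sub>v unit_vec b k) $ i = M $$ (i,k)"
proof -
  have "(M *\<^sub>v unit_vec b k) $ i = (\<Sum>l<b. M $$ (i,l) * unit_vec b k $ l)"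
    by (rule mv_index[OF M _ i]) simp
  also have "\<dots> = (\<Sum>l<b. if l = k then M $$ (i,l) else 0)"
    by (rule sum.cong) (auto simp: unit_vec_def)
  also have "\<dots> = M $$ (i,k)" using k by (simp only: sum.delta finite_lessThan) simp
  finally show ?thesis .
qed

lemma cnorm_sq: "complex_of_real ((cmod z)^2) = cnj z * z"
  using complex_norm_square[of z] by (simp add: mult.commute)

definition good :: "nat \<Rightarrow> complex mat \<Rightarrow> complex \<Rightarrow> bool" where
  "good n M t \<longleftrightarrow> M \<in> carrier_mat (n+1) (n+1) \<and> t \<noteq> 0 \<and> (\<forall>i<n. M $$ (i,n) = 0) \<and>
     (\<forall>j<n. M $$ (n,j) = 0) \<and> M $$ (n,n) = t \<and>
     (\<forall>j<n. \<forall>k<n. (\<Sum>i<n. cnj (M $$ (i,j)) * M $$ (i,k)) = (if j = k then complex_of_real ((cmod t)^2) else 0))"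

lemma good_U:
  assumes g: "good n M t"
  shows "(1/t) \<cdot>\<^sub>m M \<in> U_n1 n"
proof -
  from g have M: "M \<in> carrier_mat (n+1) (n+1)" and t: "t \<noteq> 0" and c: "\<forall>i<n. M $$ (i,n) = 0"
    and r: "\<forall>j<n. M $$ (n,j) = 0" and d: "M $$ (n,n) = t"
    and P: "\<forall>j<n. \<forall>k<n. (\<Sum>i<n. cnj (M $$ (i,j)) * M $$ (i,k)) = (if j = k then complex_of_real ((cmod t)^2) else 0)"
    unfolding good_def by auto
  let ?A = "(1/t) \<cdot>\<^sub>m M"
  have A: "?A \<in> carrier_mat (n+1) (n+1)" using M by simp
  have tt: "cnj (1/t) * (1/t) * complex_of_real ((cmod t)^2) = 1"
    using t by (simp only: complex_norm_square) (simp add: field_simps)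
  show ?thesis unfolding U_iff[OF A]
  proof (intro allI impI)
    fix j k assume j: "j < n+1" and k: "k < n+1"
    have e: "(\<Sum>i<n+1. cnj (?A $$ (i,j)) * sg n i * ?A $$ (i,k)) =
       cnj (1/t) * (1/t) * (\<Sum>i<n. cnj (M $$ (i,j)) * M $$ (i,k)) - cnj (1/t) * (1/t) * cnj (M $$ (n,j)) * M $$ (n,k)"
      using M j k by (simp add: sum_distrib_left algebra_simps)
    show "(\<Sum>i<n+1. cnj (?A $$ (i,j)) * sg n i * ?A $$ (i,k)) = (if j = k then sg n j else 0)"
    proof (cases "j < n")
      case True note jn = True
      show ?thesis
      proof (cases "k < n")
        case True
        show ?thesis unfolding e using P jn True r tt by auto
      next
        case False
        hence "k = n" using k by auto
        thus ?thesis unfolding e using c jn r by auto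
      qed
    next
      case False
      hence jn: "j = n" using j by auto
      show ?thesis
      proof (cases "k < n")
        case True
        thus ?thesis unfolding e using c jn r by auto
      next
        case False
        hence "k = n" using k by auto
        thus ?thesis unfolding e using c jn r d t by auto
      qed
    qed
  qed
qed

lemma good_elliptic:
  assumes g: "good n M t"
  shows "elliptic_PU n M"
proof -
  from g have M: "M \<in> carrier_mat (n+1) (n+1)" and t: "t \<noteq> 0" and c: "\<forall>i<n. M $$ (i,n) = 0"
    and d: "M $$ (n,n) = t" unfolding good_def by auto
  let ?A = "(1/t) \<cdot>\<^sub>m M"
  let ?z = "unit_vec (n+1) n"
  have A: "?A \<in> carrier_mat (n+1) (n+1)" using M by simp
  have eq: "M = t \<cdot>\<^sub>m ?A" using t M by (intro eq_matI) auto
  have zB: "?z \<in> ball_B n"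
    unfolding ball_B_def hnorm_first_def by auto
  have Az: "?A *\<^sub>v ?z = 1 \<cdot>\<^sub>v ?z"
  proof (rule eq_vecI)
    fix i assume "i < dim_vec (1 \<cdot>\<^sub>v ?z)"
    hence i: "i < n+1" by simp
    show "(?A *\<^sub>v ?z) $ i = (1 \<cdot>\<^sub>v ?z) $ i"
    proof -
      have "(?A *\<^sub>v ?z) $ i = ?A $$ (i,n)" by (rule mv_unit[OF A i]) simp
      moreover have "i < n \<or> i = n" using i by auto
      ultimately show ?thesis using M i c d t by (elim disjE) auto
    qed
  qed (use A M in simp)
  have ex: "\<exists>z\<in>ball_B n. \<exists>e. e \<noteq> 0 \<and> ?A *\<^sub>v z = e \<cdot>\<^sub>v z"
    by (intro bexI[OF _ zB] exI[of _ 1]) (simp only: Az, simp)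
  show ?thesis unfolding elliptic_PU_def
    by (rule exI[of _ ?A], rule exI[of _ t], intro conjI, rule good_U[OF g], rule t, rule eq, rule ex)
qed

lemma sum_split_last: "(\<Sum>l<(n::nat)+1. f l) = (\<Sum>l<n. f l) + (f n :: complex)"
  by (simp only: Suc_eq_plus1[symmetric] sum.lessThan_Suc)

lemma good_mv:
  assumes g: "good n M t" and z: "z \<in> carrier_vec (n+1)"
  shows "(M *\<^sub>v z) $ n = t * z $ n" and "\<And>i. i < n \<Longrightarrow> (M *\<^sub>v z) $ i = (\<Sum>l<n. M $$ (i,l) * z $ l)"
proof -
  from g have M: "M \<in> carrier_mat (n+1) (n+1)" and c: "\<forall>i<n. M $$ (i,n) = 0"
    and r: "\<forall>j<n. M $$ (n,j) = 0" and d: "M $$ (n,n) = t" unfolding good_def by auto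
  show "(M *\<^sub>v z) $ n = t * z $ n"
    unfolding mv_index[OF M z, of n, simplified] sum_split_last[of _ n, simplified] using r d by simp
  fix i assume i: "i < n"
  show "(M *\<^sub>v z) $ i = (\<Sum>l<n. M $$ (i,l) * z $ l)"
    using mv_index[OF M z, of i] i c by simp
qed

lemma good_hnorm:
  assumes g: "good n M t" and z: "z \<in> carrier_vec (n+1)"
  shows "hnorm_first n (M *\<^sub>v z) = (cmod t)^2 * hnorm_first n z"
proof -
  from g have P: "\<forall>j<n. \<forall>k<n. (\<Sum>i<n. cnj (M $$ (i,j)) * M $$ (i,k)) = (if j = k then complex_of_real ((cmod t)^2) else 0)"
    unfolding good_def by auto
  let ?T = "complex_of_real ((cmod t)^2)"
  have "complex_of_real (hnorm_first n (M *\<^sub>v z)) = (\<Sum>i<n. cnj (\<Sum>l<n. M $$ (i,l) * z $ l) * (\<Sum>m<n. M $$ (i,m) * z $ m))"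
    unfolding hnorm_first_def of_real_sum cnorm_sq using good_mv(2)[OF g z] by simp
  also have "\<dots> = (\<Sum>i<n. \<Sum>l<n. \<Sum>m<n. cnj (z $ l) * z $ m * (cnj (M $$ (i,l)) * M $$ (i,m)))"
    by (simp add: cnj_sum sum_product algebra_simps) (rule sum.cong, simp, rule sum.swap)
  also have "\<dots> = (\<Sum>l<n. \<Sum>m<n. \<Sum>i<n. cnj (z $ l) * z $ m * (cnj (M $$ (i,l)) * M $$ (i,m)))"
    by (subst sum.swap, rule sum.cong, simp, subst sum.swap, simp)
  also have "\<dots> = (\<Sum>l<n. \<Sum>m<n. cnj (z $ l) * z $ m * (\<Sum>i<n. cnj (M $$ (i,l)) * M $$ (i,m)))"
    by (simp add: sum_distrib_left)
  also have "\<dots> = (\<Sum>l<n. \<Sum>m<n. if m = l then cnj (z $ l) * z $ m * ?T else 0)"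
    using P by (intro sum.cong) auto
  also have "\<dots> = (\<Sum>l<n. cnj (z $ l) * z $ l * ?T)"
    by (rule sum.cong, simp, simp only: sum.delta finite_lessThan, simp)
  also have "\<dots> = complex_of_real ((cmod t)^2 * hnorm_first n z)"
    unfolding hnorm_first_def of_real_mult of_real_sum cnorm_sq by (simp add: sum_distrib_left algebra_simps)
  finally show ?thesis by (simp only: of_real_eq_iff)
qed

definition adjU :: "nat \<Rightarrow> complex mat \<Rightarrow> complex mat" where
  "adjU n X = mat (n+1) (n+1) (\<lambda>(j,i). sg n j * sg n i * cnj (X $$ (i,j)))"

lemma adjU_carrier[simp]: "adjU n X \<in> carrier_mat (n+1) (n+1)"
  unfolding adjU_def by auto

lemma adjU_dims[simp]: "dim_row (adjU n X) = n+1" "dim_col (adjU n X) = n+1"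
  unfolding adjU_def by auto

lemma adjU_inv:
  assumes X: "X \<in> U_n1 n"
  shows "adjU n X * X = 1\<^sub>m (n+1)"
proof -
  have Xc: "X \<in> carrier_mat (n+1) (n+1)" using X unfolding U_n1_def by auto
  note h = X[unfolded U_iff[OF Xc]]
  show ?thesis
  proof (rule eq_matI)
    fix j k assume j: "j < dim_row (1\<^sub>m (n+1))" and k: "k < dim_col (1\<^sub>m (n+1) :: complex mat)"
    hence j': "j < n+1" and k': "k < n+1" by auto
    have "(adjU n X * X) $$ (j,k) = (\<Sum>i<n+1. adjU n X $$ (j,i) * X $$ (i,k))"
      using Xc j' k' by (subst index_mult_mat, auto simp: scalar_prod_def atLeast0LessThan carrier_matD[OF Xc] simp del: sum.lessThan_Suc)
    also have "\<dots> = sg n j * (\<Sum>i<n+1. cnj (X $$ (i,j)) * sg n i * X $$ (i,k))"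
      unfolding sum_distrib_left
    proof (rule sum.cong[OF refl])
      fix i assume "i \<in> {..<n+1}"
      hence i: "i < n+1" by simp
      have "adjU n X $$ (j,i) = sg n j * sg n i * cnj (X $$ (i,j))"
        unfolding adjU_def using i j' by simp
      thus "adjU n X $$ (j,i) * X $$ (i,k) = sg n j * (cnj (X $$ (i,j)) * sg n i * X $$ (i,k))"
        by (simp only: ac_simps)
    qed
    also have "\<dots> = sg n j * (if j = k then sg n j else 0)" by (simp only: h[rule_format, OF j' k'])
    also have "\<dots> = (1\<^sub>m (n+1)) $$ (j,k)" using j' k' by simp
    finally show "(adjU n X * X) $$ (j,k) = (1\<^sub>m (n+1)) $$ (j,k)" .
  qed (use Xc in auto)
qed

lemma good_inv:
  assumes g: "good n M t"
  shows "\<exists>Mi. Mi \<in> carrier_mat (n+1) (n+1) \<and> Mi * M = 1\<^sub>m (n+1) \<and> M * Mi = 1\<^sub>m (n+1)"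
proof -
  from g have M: "M \<in> carrier_mat (n+1) (n+1)" and t: "t \<noteq> 0" unfolding good_def by auto
  let ?A = "(1/t) \<cdot>\<^sub>m M"
  let ?Mi = "(1/t) \<cdot>\<^sub>m adjU n ?A"
  have c: "adjU n ?A * ?A = 1\<^sub>m (n+1)" by (rule adjU_inv[OF good_U[OF g]])
  have a: "?Mi * M = (1/t) \<cdot>\<^sub>m (adjU n ?A * M)" by (rule mult_smult_assoc_mat) (use M in auto)
  have b: "(1/t) \<cdot>\<^sub>m (adjU n ?A * M) = adjU n ?A * ?A" by (rule mult_smult_distrib[symmetric]) (use M in auto)
  have l: "?Mi * M = 1\<^sub>m (n+1)" by (rule trans[OF a trans[OF b c]])
  have Mic: "?Mi \<in> carrier_mat (n+1) (n+1)" by (rule smult_carrier_mat[OF adjU_carrier])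
  have r: "M * ?Mi = 1\<^sub>m (n+1)" by (rule mat_mult_left_right_inverse[OF Mic M l])
  show ?thesis using Mic l r by blast
qed

lemma mv_zero: "(M :: complex mat) \<in> carrier_mat a b \<Longrightarrow> M *\<^sub>v 0\<^sub>v b = 0\<^sub>v a"
  by (intro eq_vecI) (auto simp: scalar_prod_def)

lemma good_preserves:
  assumes g: "good n M t"
  shows "\<forall>r>0. mat_image M (Tset n r) = Tset n r"
proof (intro allI impI)
  fix r :: real assume r: "r > 0"
  from g have M: "M \<in> carrier_mat (n+1) (n+1)" and t: "t \<noteq> 0" unfolding good_def by auto
  obtain Mi where Mi: "Mi \<in> carrier_mat (n+1) (n+1)" and l: "Mi * M = 1\<^sub>m (n+1)" and rr: "M * Mi = 1\<^sub>m (n+1)"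
    using good_inv[OF g] by blast
  have key: "M *\<^sub>v z \<in> Tset n r \<longleftrightarrow> z \<in> Tset n r" if z: "z \<in> carrier_vec (n+1)" for z
  proof -
    have nz: "M *\<^sub>v z = 0\<^sub>v (n+1) \<longleftrightarrow> z = 0\<^sub>v (n+1)"
    proof
      assume "M *\<^sub>v z = 0\<^sub>v (n+1)"
      hence "Mi *\<^sub>v (M *\<^sub>v z) = 0\<^sub>v (n+1)" using mv_zero[OF Mi] by simp
      moreover have "Mi *\<^sub>v (M *\<^sub>v z) = z" using Mi M z l
        by (subst assoc_mult_mat_vec[symmetric, of _ "n+1" "n+1" _ "n+1"]) auto
      ultimately show "z = 0\<^sub>v (n+1)" by simp
    qed (use mv_zero[OF M] in simp)
    have tp: "(cmod t)^2 > 0" using t by simp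
    have e2: "r * (cmod (t * z $ n))\<^sup>2 = (cmod t)^2 * (r * (cmod (z $ n))\<^sup>2)"
      by (simp add: norm_mult power_mult_distrib)
    have "hnorm_first n (M *\<^sub>v z) = r * (cmod ((M *\<^sub>v z) $ n))\<^sup>2 \<longleftrightarrow>
          (cmod t)^2 * hnorm_first n z = (cmod t)^2 * (r * (cmod (z $ n))\<^sup>2)"
      unfolding good_hnorm[OF g z] good_mv(1)[OF g z] e2 ..
    also have "\<dots> \<longleftrightarrow> hnorm_first n z = r * (cmod (z $ n))\<^sup>2" using tp by simp
    finally have eqv: "hnorm_first n (M *\<^sub>v z) = r * (cmod ((M *\<^sub>v z) $ n))\<^sup>2 \<longleftrightarrow>
          hnorm_first n z = r * (cmod (z $ n))\<^sup>2" .
    have c1: "M *\<^sub>v z \<in> carrier_vec (n+1)" using M z by simp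
    show ?thesis unfolding Tset_def mem_Collect_eq using c1 nz eqv z by simp
  qed
  show "mat_image M (Tset n r) = Tset n r"
  proof
    show "mat_image M (Tset n r) \<subseteq> Tset n r"
    proof
      fix w assume "w \<in> mat_image M (Tset n r)"
      then obtain z where z: "z \<in> Tset n r" and wz: "w = M *\<^sub>v z" unfolding mat_image_def by blast
      have zc: "z \<in> carrier_vec (n+1)" using z unfolding Tset_def by blast
      show "w \<in> Tset n r" using key[OF zc] z wz by simp
    qed
  next
    show "Tset n r \<subseteq> mat_image M (Tset n r)"
    proof
      fix w assume w: "w \<in> Tset n r"
      hence wc: "w \<in> carrier_vec (n+1)" unfolding Tset_def by auto
      have e: "M *\<^sub>v (Mi *\<^sub>v w) = w" using Mi M wc rr
        by (subst assoc_mult_mat_vec[symmetric, of _ "n+1" "n+1" _ "n+1"]) auto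
      have "Mi *\<^sub>v w \<in> Tset n r" using key[of "Mi *\<^sub>v w"] e w Mi wc mult_mat_vec_carrier[OF Mi wc] by auto
      thus "w \<in> mat_image M (Tset n r)" unfolding mat_image_def by (rule image_eqI[rotated]) (use e in simp)
    qed
  qed
qed

lemma cmod_lin_sq: "(cmod (complex_of_real e * p + q))^2 = e^2 * (cmod p)^2 + 2 * e * Re (cnj p * q) + (cmod q)^2"
  by (simp only: cmod_power2) (simp add: power2_eq_square algebra_simps)

lemma cmod_add_sq: "(cmod (x + y))^2 = (cmod x)^2 + (cmod y)^2 + 2 * Re (cnj x * y)"
  by (simp only: cmod_power2) (simp add: power2_eq_square algebra_simps)

lemma poly4:
  fixes c0 c1 c2 c3 c4 :: real
  assumes h: "\<forall>e>0. c0 + c1*e + c2*e^2 + c3*e^3 + c4*e^4 = 0"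
  shows "c0 = 0 \<and> c1 = 0 \<and> c2 = 0 \<and> c3 = 0 \<and> c4 = 0"
proof -
  let ?p = "[:c0,c1,c2,c3,c4:]"
  have "poly ?p e = c0 + c1*e + c2*e^2 + c3*e^3 + c4*e^4" for e
    by (simp add: eval_nat_numeral algebra_simps)
  hence "{0<..} \<subseteq> {x. poly ?p x = 0}" using h by auto
  hence "?p = 0" using poly_roots_finite infinite_Ioi finite_subset by blast
  thus ?thesis by simp
qed

lemma test_vec:
  fixes M :: "complex mat" and w :: "nat \<Rightarrow> complex"
  assumes M: "M \<in> carrier_mat (n+1) (n+1)" and pres: "\<forall>r>0. mat_image M (Tset n r) = Tset n r"
    and S: "(\<Sum>j<n. (cmod (w j))^2) > 0"
  shows "(\<forall>i<n. M $$ (i,n) = 0) \<and> (\<Sum>l<n. M $$ (n,l) * w l) = 0 \<and>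
     (\<Sum>i<n. (cmod (\<Sum>l<n. M $$ (i,l) * w l))^2) = (\<Sum>j<n. (cmod (w j))^2) * (cmod (M $$ (n,n)))^2"
proof -
  define S where "S = (\<Sum>j<n. (cmod (w j))^2)"
  define p where "p i = (\<Sum>l<n. M $$ (i,l) * w l)" for i
  have Sp: "S > 0" using assms unfolding S_def by simp
  have main: "(\<Sum>i<n. (cmod (complex_of_real e * p i + M $$ (i,n)))^2) =
     e^2 * S * (cmod (complex_of_real e * p n + M $$ (n,n)))^2" if e: "e > 0" for e :: real
  proof -
    define z where "z = vec (n+1) (\<lambda>l. if l < n then complex_of_real e * w l else 1)"
    have zc: "z \<in> carrier_vec (n+1)" unfolding z_def by simp
    have zn: "z $ n = 1" unfolding z_def by simp
    have zl: "l < n \<Longrightarrow> z $ l = complex_of_real e * w l" for l unfolding z_def by simp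
    have hz: "hnorm_first n z = e^2 * S"
      unfolding hnorm_first_def S_def sum_distrib_left
      by (rule sum.cong, simp, simp add: zl norm_mult power_mult_distrib)
    have "z \<noteq> 0\<^sub>v (n+1)" using zn by (metis index_zero_vec(1) less_add_one zero_neq_one)
    hence zT: "z \<in> Tset n (e^2 * S)" unfolding Tset_def using zc hz zn by simp
    have rpos: "e^2 * S > 0" using e Sp by simp
    have "M *\<^sub>v z \<in> mat_image M (Tset n (e^2 * S))" unfolding mat_image_def using zT by blast
    hence MzT: "M *\<^sub>v z \<in> Tset n (e^2 * S)" using pres rpos by simp
    have Mz: "(M *\<^sub>v z) $ i = complex_of_real e * p i + M $$ (i,n)" if i: "i < n+1" for i
    proof -
      have "(M *\<^sub>v z) $ i = (\<Sum>l<n. M $$ (i,l) * z $ l) + M $$ (i,n) * z $ n"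
        unfolding mv_index[OF M zc i] sum_split_last ..
      also have "\<dots> = complex_of_real e * p i + M $$ (i,n)"
        unfolding p_def zn sum_distrib_left by (simp add: zl ac_simps)
      finally show ?thesis .
    qed
    have "hnorm_first n (M *\<^sub>v z) = (\<Sum>i<n. (cmod (complex_of_real e * p i + M $$ (i,n)))^2)"
      unfolding hnorm_first_def by (rule sum.cong, simp, simp add: Mz)
    moreover have "hnorm_first n (M *\<^sub>v z) = e^2 * S * (cmod ((M *\<^sub>v z) $ n))^2"
      using MzT unfolding Tset_def by simp
    ultimately show ?thesis using Mz[of n] by simp
  qed
  define X where "X = (\<Sum>i<n. (cmod (p i))^2)"
  define Y where "Y = (\<Sum>i<n. Re (cnj (p i) * M $$ (i,n)))"
  define Z where "Z = (\<Sum>i<n. (cmod (M $$ (i,n)))^2)"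
  define A where "A = (cmod (p n))^2"
  define B where "B = Re (cnj (p n) * M $$ (n,n))"
  define T where "T = (cmod (M $$ (n,n)))^2"
  have "\<forall>e>0. Z + (2*Y)*e + (X - S*T)*e^2 + (-2*S*B)*e^3 + (-S*A)*e^4 = 0"
  proof (intro allI impI)
    fix e :: real assume e: "e > 0"
    have l: "(\<Sum>i<n. (cmod (complex_of_real e * p i + M $$ (i,n)))^2) = e^2 * X + 2 * e * Y + Z"
      unfolding X_def Y_def Z_def cmod_lin_sq sum.distrib sum_distrib_left ..
    have r: "e^2 * S * (cmod (complex_of_real e * p n + M $$ (n,n)))^2 = e^2 * S * (e^2 * A + 2 * e * B + T)"
      unfolding A_def B_def T_def cmod_lin_sq ..
    from main[OF e] l r show "Z + (2*Y)*e + (X - S*T)*e^2 + (-2*S*B)*e^3 + (-S*A)*e^4 = 0"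
      by (simp add: eval_nat_numeral algebra_simps)
  qed
  from poly4[OF this] have Z0: "Z = 0" and A0: "S * A = 0" and X0: "X = S * T" by auto
  have "\<forall>i\<in>{..<n}. (cmod (M $$ (i,n)))^2 = 0" using Z0 unfolding Z_def
    by (subst sum_nonneg_eq_0_iff[symmetric]) auto
  hence c1: "\<forall>i<n. M $$ (i,n) = 0" by simp
  have "A = 0" using A0 Sp by simp
  hence c2: "p n = 0" unfolding A_def by simp
  show ?thesis using c1 c2 X0 unfolding X_def T_def p_def S_def by simp
qed

lemma pres_good:
  fixes M :: "complex mat"
  assumes n: "n \<ge> 1" and M: "M \<in> carrier_mat (n+1) (n+1)" and dt: "det M \<noteq> 0"
    and pres: "\<forall>r>0. mat_image M (Tset n r) = Tset n r"
  shows "good n M (M $$ (n,n))"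
proof -
  define T where "T = (cmod (M $$ (n,n)))^2"
  define e where "e j = (\<lambda>l. if l = j then 1 else 0 :: complex)" for j :: nat
  have Se: "(\<Sum>l<n. (cmod (e j l))^2) = 1" if j: "j < n" for j
  proof -
    have "(\<Sum>l<n. (cmod (e j l))^2) = (\<Sum>l<n. if l = j then 1 else 0)"
      by (rule sum.cong) (auto simp: e_def)
    also have "\<dots> = 1" using j by (simp only: sum.delta finite_lessThan) simp
    finally show ?thesis .
  qed
  have pe: "(\<Sum>l<n. M $$ (i,l) * e j l) = M $$ (i,j)" if j: "j < n" for i j
  proof -
    have "(\<Sum>l<n. M $$ (i,l) * e j l) = (\<Sum>l<n. if l = j then M $$ (i,l) else 0)"
      by (rule sum.cong) (auto simp: e_def)
    also have "\<dots> = M $$ (i,j)" using j by (simp only: sum.delta finite_lessThan) simp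
    finally show ?thesis .
  qed
  have tv: "(\<forall>i<n. M $$ (i,n) = 0) \<and> M $$ (n,j) = 0 \<and> (\<Sum>i<n. (cmod (M $$ (i,j)))^2) = T" if j: "j < n" for j
    using test_vec[OF M pres, of "e j"] Se[OF j] pe[OF j] unfolding T_def by simp
  have c1: "\<forall>i<n. M $$ (i,n) = 0" using tv[of 0] n by simp
  have r1: "\<forall>j<n. M $$ (n,j) = 0" using tv by blast
  have d1: "(\<Sum>i<n. (cmod (M $$ (i,j)))^2) = T" if "j < n" for j using tv that by blast
  have t0: "M $$ (n,n) \<noteq> 0"
  proof
    assume z: "M $$ (n,n) = 0"
    have "M *\<^sub>v unit_vec (n+1) n = 0\<^sub>v (n+1)"
    proof (rule eq_vecI)
      fix i assume "i < dim_vec (0\<^sub>v (n+1) :: complex vec)"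
      hence i: "i < n+1" by simp
      have "(M *\<^sub>v unit_vec (n+1) n) $ i = M $$ (i,n)" by (rule mv_unit[OF M i]) simp
      moreover have "i < n \<or> i = n" using i by auto
      ultimately show "(M *\<^sub>v unit_vec (n+1) n) $ i = 0\<^sub>v (n+1) $ i" using c1 z i by auto
    qed (use M in simp)
    hence "det M = 0" using det_0_iff_vec_prod_zero[OF M]
      by (metis unit_vec_carrier unit_vec_nonzero less_add_one)
    thus False using dt by simp
  qed
  define G where "G j k = (\<Sum>i<n. cnj (M $$ (i,j)) * M $$ (i,k))" for j k
  have pol: "Re (c * G j k) = 0" if c: "cmod c = 1" and j: "j < n" and k: "k < n" and jk: "j \<noteq> k" for c j k
  proof -
    define w where "w l = e j l + c * e k l" for l
    have "(\<Sum>l<n. (cmod (w l))^2) = (\<Sum>l<n. (if l = j then 1 else 0) + (if l = k then 1 else 0))"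
      by (rule sum.cong) (use c jk in \<open>auto simp: w_def e_def\<close>)
    also have "\<dots> = 2" using j k by (simp only: sum.distrib sum.delta finite_lessThan) simp
    finally have Sw: "(\<Sum>l<n. (cmod (w l))^2) = 2" .
    have pw: "(\<Sum>l<n. M $$ (i,l) * w l) = M $$ (i,j) + c * M $$ (i,k)" for i
    proof -
      have "(\<Sum>l<n. M $$ (i,l) * w l) = (\<Sum>l<n. M $$ (i,l) * e j l) + c * (\<Sum>l<n. M $$ (i,l) * e k l)"
        unfolding w_def sum_distrib_left by (simp add: sum.distrib algebra_simps)
      thus ?thesis using pe[OF j] pe[OF k] by simp
    qed
    have "(\<Sum>i<n. (cmod (M $$ (i,j) + c * M $$ (i,k)))^2) = 2 * T"
      using test_vec[OF M pres, of w] Sw pw unfolding T_def by simp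
    moreover have "(\<Sum>i<n. (cmod (M $$ (i,j) + c * M $$ (i,k)))^2) =
       (\<Sum>i<n. (cmod (M $$ (i,j)))^2) + (\<Sum>i<n. (cmod (M $$ (i,k)))^2) + 2 * Re (c * G j k)"
      unfolding cmod_add_sq sum.distrib G_def sum_distrib_left Re_sum
      by (simp add: norm_mult c algebra_simps)
    ultimately show ?thesis using d1[OF j] d1[OF k] by simp
  qed
  have P: "\<forall>j<n. \<forall>k<n. (\<Sum>i<n. cnj (M $$ (i,j)) * M $$ (i,k)) = (if j = k then complex_of_real ((cmod (M $$ (n,n)))^2) else 0)"
  proof (intro allI impI)
    fix j k assume j: "j < n" and k: "k < n"
    show "(\<Sum>i<n. cnj (M $$ (i,j)) * M $$ (i,k)) = (if j = k then complex_of_real ((cmod (M $$ (n,n)))^2) else 0)"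
    proof (cases "j = k")
      case True
      have "(\<Sum>i<n. cnj (M $$ (i,j)) * M $$ (i,j)) = complex_of_real (\<Sum>i<n. (cmod (M $$ (i,j)))^2)"
        unfolding of_real_sum cnorm_sq ..
      also have "\<dots> = complex_of_real T" by (simp only: d1[OF j])
      finally have "(\<Sum>i<n. cnj (M $$ (i,j)) * M $$ (i,j)) = complex_of_real T" .
      thus ?thesis using True unfolding T_def by simp
    next
      case False
      have a: "Re (G j k) = 0" using pol[of 1 j k] j k False by simp
      have b: "Re (\<i> * G j k) = 0" using pol[of "\<i>" j k] j k False by simp
      have "G j k = 0" using a b by (simp add: complex_eq_iff)
      thus ?thesis using False unfolding G_def by simp
    qed
  qed
  show ?thesis unfolding good_def using M t0 c1 r1 P by blast
qed

definition bst_a :: "nat \<Rightarrow> (nat \<Rightarrow> complex) \<Rightarrow> real" where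
  "bst_a n v = 1 / sqrt (1 - (\<Sum>i<n. (cmod (v i))^2))"

definition bst :: "nat \<Rightarrow> (nat \<Rightarrow> complex) \<Rightarrow> complex mat" where
  "bst n v = mat (n+1) (n+1) (\<lambda>(i,j).
     if i < n \<and> j < n then (if i = j then 1 else 0) + complex_of_real ((bst_a n v)^2 / (bst_a n v + 1)) * v i * cnj (v j)
     else if i < n then complex_of_real (bst_a n v) * v i
     else if j < n then complex_of_real (bst_a n v) * cnj (v j)
     else complex_of_real (bst_a n v))"

lemma bst_carrier[simp]: "bst n v \<in> carrier_mat (n+1) (n+1)"
  unfolding bst_def by simp

lemma bst_scalars:
  assumes s: "(\<Sum>i<n. (cmod (v i))^2) < 1"
  defines "a \<equiv> bst_a n v" and "k \<equiv> (bst_a n v)^2 / (bst_a n v + 1)"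
  shows "a > 0" and "a^2 * (\<Sum>i<n. (cmod (v i))^2) = a^2 - 1" and "1 + k * (\<Sum>i<n. (cmod (v i))^2) - a = 0"
    and "2 * k + k^2 * (\<Sum>i<n. (cmod (v i))^2) - a^2 = 0"
proof -
  define S where "S = (\<Sum>i<n. (cmod (v i))^2)"
  have S1: "S < 1" using s unfolding S_def .
  have ad: "a = 1 / sqrt (1 - S)" unfolding a_def bst_a_def S_def ..
  show ap: "a > 0" unfolding ad using S1 by simp
  have a2: "a^2 * (1 - S) = 1" unfolding ad using S1 by (simp add: power_divide)
  show a2S: "a^2 * (\<Sum>i<n. (cmod (v i))^2) = a^2 - 1" using a2 unfolding S_def by (simp add: algebra_simps)
  have kd: "k = a^2 / (a + 1)" unfolding k_def a_def ..
  have ks: "k * S = a - 1"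
  proof -
    have "k * S = (a^2 - 1) / (a + 1)" unfolding kd using a2S unfolding S_def by (simp add: algebra_simps)
    also have "\<dots> = a - 1" using ap by (simp add: power2_eq_square field_simps)
    finally show ?thesis .
  qed
  show "1 + k * (\<Sum>i<n. (cmod (v i))^2) - a = 0" using ks unfolding S_def by simp
  have "2 * k + k^2 * S - a^2 = k * (2 + k * S) - a^2" by (simp add: power2_eq_square algebra_simps)
  also have "\<dots> = k * (a + 1) - a^2" using ks by simp
  also have "\<dots> = 0" unfolding kd using ap by simp
  finally show "2 * k + k^2 * (\<Sum>i<n. (cmod (v i))^2) - a^2 = 0" unfolding S_def .
qed

lemma sum_delta_mult: "j < (n::nat) \<Longrightarrow> (\<Sum>i<n. (if i = j then 1 else 0) * f i) = (f j :: complex)"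
proof -
  assume j: "j < n"
  have "(\<Sum>i<n. (if i = j then 1 else 0) * f i) = (\<Sum>i<n. if i = j then f i else 0)"
    by (rule sum.cong) auto
  also have "\<dots> = f j" using j by (simp only: sum.delta finite_lessThan) simp
  finally show ?thesis .
qed

lemma cnj_sq_sum: "(\<Sum>i<n. cnj (v i) * v i) = complex_of_real (\<Sum>i<n. (cmod (v i))^2)"
  unfolding of_real_sum cnorm_sq ..

lemma bst_U:
  assumes s: "(\<Sum>i<n. (cmod (v i))^2) < 1"
  shows "bst n v \<in> U_n1 n"
proof -
  define S where "S = (\<Sum>i<n. (cmod (v i))^2)"
  define a where "a = bst_a n v"
  define k where "k = (bst_a n v)^2 / (bst_a n v + 1)"
  note sc = bst_scalars[OF s, folded a_def k_def S_def]
  let ?B = "bst n v"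
  let ?K = "complex_of_real k" and ?a = "complex_of_real a"
  have B1: "?B $$ (i,j) = (if i = j then 1 else 0) + ?K * v i * cnj (v j)" if "i < n" "j < n" for i j
    using that unfolding bst_def k_def by simp
  have B2: "?B $$ (i,n) = ?a * v i" if "i < n" for i
    using that unfolding bst_def a_def by simp
  have B3: "?B $$ (n,j) = ?a * cnj (v j)" if "j < n" for j
    using that unfolding bst_def a_def by simp
  have B4: "?B $$ (n,n) = ?a"
    unfolding bst_def a_def by simp
  have vs: "(\<Sum>i<n. cnj (v i) * v i) = complex_of_real S" unfolding S_def by (rule cnj_sq_sum)
  have split: "(\<Sum>i<n+1. cnj (?B $$ (i,j)) * sg n i * ?B $$ (i,k')) =
     (\<Sum>i<n. cnj (?B $$ (i,j)) * ?B $$ (i,k')) - cnj (?B $$ (n,j)) * ?B $$ (n,k')" for j k'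
    unfolding sum_split_last by simp
  have sc2: "2 * ?K + ?K^2 * complex_of_real S - ?a^2 = 0"
    using arg_cong[OF sc(4), of complex_of_real] by simp
  have sc3: "1 + ?K * complex_of_real S - ?a = 0"
    using arg_cong[OF sc(3), of complex_of_real] by simp
  have sc4: "?a^2 * complex_of_real S - ?a^2 = -1"
    using arg_cong[OF sc(2), of complex_of_real] by simp
  show ?thesis unfolding U_iff[OF bst_carrier]
  proof (intro allI impI)
    fix j k' assume j: "j < n+1" and k': "k' < n+1"
    show "(\<Sum>i<n+1. cnj (?B $$ (i,j)) * sg n i * ?B $$ (i,k')) = (if j = k' then sg n j else 0)"
      unfolding split
    proof (cases "j < n")
      case jn: True
      show "(\<Sum>i<n. cnj (?B $$ (i,j)) * ?B $$ (i,k')) - cnj (?B $$ (n,j)) * ?B $$ (n,k') = (if j = k' then sg n j else 0)"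
      proof (cases "k' < n")
        case kn: True
        have "(\<Sum>i<n. cnj (?B $$ (i,j)) * ?B $$ (i,k')) =
          (\<Sum>i<n. (if i = j then 1 else 0) * (if i = k' then 1 else 0) + ?K * ((if i = j then 1 else 0) * v i) * cnj (v k')
             + ?K * v j * ((if i = k' then 1 else 0) * cnj (v i)) + ?K^2 * (cnj (v i) * v i) * (v j * cnj (v k')))"
          by (rule sum.cong[OF refl]) (simp add: B1 jn kn algebra_simps power2_eq_square)
        also have "\<dots> = (if j = k' then 1 else 0) + ?K * v j * cnj (v k') + ?K * v j * cnj (v k') + ?K^2 * complex_of_real S * (v j * cnj (v k'))"
          unfolding sum.distrib sum_distrib_left[symmetric] sum_distrib_right[symmetric] vs
          by (simp only: sum_delta_mult[OF jn] sum_delta_mult[OF kn])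
        finally have e1: "(\<Sum>i<n. cnj (?B $$ (i,j)) * ?B $$ (i,k')) = (if j = k' then 1 else 0) + (2 * ?K + ?K^2 * complex_of_real S) * (v j * cnj (v k'))"
          by (simp add: algebra_simps)
        have e2: "cnj (?B $$ (n,j)) * ?B $$ (n,k') = ?a^2 * (v j * cnj (v k'))"
          using B3 jn kn by (simp add: power2_eq_square)
        have "(2 * ?K + ?K^2 * complex_of_real S) = ?a^2" using sc2 by (simp add: algebra_simps)
        thus ?thesis unfolding e1 e2 using jn kn by simp
      next
        case False
        hence kn: "k' = n" using k' by simp
        have "(\<Sum>i<n. cnj (?B $$ (i,j)) * ?B $$ (i,k')) =
          (\<Sum>i<n. ?a * ((if i = j then 1 else 0) * v i) + ?a * ?K * v j * (cnj (v i) * v i))"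
          by (rule sum.cong[OF refl]) (simp add: B1 B2 jn kn algebra_simps)
        also have "\<dots> = ?a * v j + ?a * ?K * v j * complex_of_real S"
          unfolding sum.distrib sum_distrib_left[symmetric] vs
          by (simp only: sum_delta_mult[OF jn])
        finally have e1: "(\<Sum>i<n. cnj (?B $$ (i,j)) * ?B $$ (i,k')) = ?a * v j * (1 + ?K * complex_of_real S)"
          by (simp add: algebra_simps)
        have e2: "cnj (?B $$ (n,j)) * ?B $$ (n,k') = ?a * v j * ?a"
          using B3 B4 jn kn by simp
        have "1 + ?K * complex_of_real S = ?a" using sc3 by (simp add: algebra_simps)
        thus ?thesis unfolding e1 e2 using jn kn by simp
      qed
    next
      case False
      hence jn: "j = n" using j by simp
      show "(\<Sum>i<n. cnj (?B $$ (i,j)) * ?B $$ (i,k')) - cnj (?B $$ (n,j)) * ?B $$ (n,k') = (if j = k' then sg n j else 0)"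
      proof (cases "k' < n")
        case kn: True
        have "(\<Sum>i<n. cnj (?B $$ (i,j)) * ?B $$ (i,k')) =
          (\<Sum>i<n. ?a * ((if i = k' then 1 else 0) * cnj (v i)) + ?a * ?K * cnj (v k') * (cnj (v i) * v i))"
          by (rule sum.cong[OF refl]) (simp add: B1 B2 jn kn algebra_simps)
        also have "\<dots> = ?a * cnj (v k') + ?a * ?K * cnj (v k') * complex_of_real S"
          unfolding sum.distrib sum_distrib_left[symmetric] vs
          by (simp only: sum_delta_mult[OF kn])
        finally have e1: "(\<Sum>i<n. cnj (?B $$ (i,j)) * ?B $$ (i,k')) = ?a * cnj (v k') * (1 + ?K * complex_of_real S)"
          by (simp add: algebra_simps)
        have e2: "cnj (?B $$ (n,j)) * ?B $$ (n,k') = ?a * cnj (v k') * ?a"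
          using B3 B4 jn kn by simp
        have "1 + ?K * complex_of_real S = ?a" using sc3 by (simp add: algebra_simps)
        thus ?thesis unfolding e1 e2 using jn kn by simp
      next
        case False
        hence kn: "k' = n" using k' by simp
        have "(\<Sum>i<n. cnj (?B $$ (i,j)) * ?B $$ (i,k')) = (\<Sum>i<n. ?a^2 * (cnj (v i) * v i))"
          by (rule sum.cong[OF refl]) (simp add: B2 jn kn algebra_simps power2_eq_square)
        also have "\<dots> = ?a^2 * complex_of_real S" unfolding sum_distrib_left[symmetric] vs ..
        finally have e1: "(\<Sum>i<n. cnj (?B $$ (i,j)) * ?B $$ (i,k')) = ?a^2 * complex_of_real S" .
        have e2: "cnj (?B $$ (n,j)) * ?B $$ (n,k') = ?a^2"
          using B4 jn kn by (simp add: power2_eq_square)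
        show ?thesis unfolding e1 e2 using jn kn sc4 by simp
      qed
    qed
  qed
qed

lemma adjU_index: "j < n+1 \<Longrightarrow> i < n+1 \<Longrightarrow> adjU n X $$ (j,i) = sg n j * sg n i * cnj (X $$ (i,j))"
  unfolding adjU_def by simp

lemma bst_a_neg[simp]: "bst_a n (\<lambda>i. - v i) = bst_a n v"
  unfolding bst_a_def by simp

lemma bst_neg: "bst n (\<lambda>i. - v i) = adjU n (bst n v)"
proof (rule eq_matI)
  fix j i assume j: "j < dim_row (adjU n (bst n v))" and i: "i < dim_col (adjU n (bst n v))"
  hence j': "j < n+1" and i': "i < n+1" by auto
  show "bst n (\<lambda>i. - v i) $$ (j,i) = adjU n (bst n v) $$ (j,i)"
    unfolding adjU_index[OF j' i'] using j' i' unfolding bst_def by (auto simp: algebra_simps)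
qed (auto simp: bst_def)

lemma bst_inv:
  assumes s: "(\<Sum>i<n. (cmod (v i))^2) < 1"
  shows "bst n (\<lambda>i. - v i) * bst n v = 1\<^sub>m (n+1)" and "bst n v * bst n (\<lambda>i. - v i) = 1\<^sub>m (n+1)"
proof -
  show l: "bst n (\<lambda>i. - v i) * bst n v = 1\<^sub>m (n+1)"
    unfolding bst_neg by (rule adjU_inv[OF bst_U[OF s]])
  show "bst n v * bst n (\<lambda>i. - v i) = 1\<^sub>m (n+1)"
    by (rule mat_mult_left_right_inverse[OF bst_carrier bst_carrier l])
qed

lemma ct_mult:
  assumes X: "X \<in> carrier_mat m m" and Y: "Y \<in> carrier_mat m m"
  shows "conj_transpose (X * Y) = conj_transpose Y * conj_transpose X"
proof (rule eq_matI)
  fix i j assume i: "i < dim_row (conj_transpose Y * conj_transpose X)" and j: "j < dim_col (conj_transpose Y * conj_transpose X)"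
  hence i': "i < m" and j': "j < m" using X Y by auto
  have "conj_transpose (X * Y) $$ (i,j) = cnj ((X * Y) $$ (j,i))"
    using X Y i' j' by (intro ct_index) auto
  also have "\<dots> = cnj (\<Sum>l<m. X $$ (j,l) * Y $$ (l,i))"
    using X Y i' j' by (subst index_mult_mat, auto simp: scalar_prod_def atLeast0LessThan carrier_matD[OF X] carrier_matD[OF Y] simp del: sum.lessThan_Suc)
  also have "\<dots> = (\<Sum>l<m. conj_transpose Y $$ (i,l) * conj_transpose X $$ (l,j))"
    unfolding cnj_sum using X Y i' j' by (intro sum.cong) auto
  also have "\<dots> = (conj_transpose Y * conj_transpose X) $$ (i,j)"
    using X Y i' j' by (subst index_mult_mat, auto simp: scalar_prod_def atLeast0LessThan carrier_matD[OF X] carrier_matD[OF Y] simp del: sum.lessThan_Suc)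
  finally show "conj_transpose (X * Y) $$ (i,j) = (conj_transpose Y * conj_transpose X) $$ (i,j)" .
qed (use X Y in auto)

lemma U_mult:
  assumes X: "X \<in> U_n1 n" and Y: "Y \<in> U_n1 n"
  shows "X * Y \<in> U_n1 n"
proof -
  have Xc: "X \<in> carrier_mat (n+1) (n+1)" and eX: "conj_transpose X * J_form n * X = J_form n"
    using X unfolding U_n1_def by auto
  have Yc: "Y \<in> carrier_mat (n+1) (n+1)" and eY: "conj_transpose Y * J_form n * Y = J_form n"
    using Y unfolding U_n1_def by auto
  have cX: "conj_transpose X \<in> carrier_mat (n+1) (n+1)" and cY: "conj_transpose Y \<in> carrier_mat (n+1) (n+1)"
    using Xc Yc by auto
  have J: "J_form n \<in> carrier_mat (n+1) (n+1)" by simp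
  have e0: "conj_transpose (X * Y) * J_form n * (X * Y) = conj_transpose Y * conj_transpose X * J_form n * (X * Y)"
    unfolding ct_mult[OF Xc Yc] ..
  have QJ: "conj_transpose X * J_form n \<in> carrier_mat (n+1) (n+1)" by (rule mult_carrier_mat[OF cX J])
  have XY: "X * Y \<in> carrier_mat (n+1) (n+1)" by (rule mult_carrier_mat[OF Xc Yc])
  have "conj_transpose Y * conj_transpose X * J_form n * (X * Y) = conj_transpose Y * ((conj_transpose X * J_form n) * (X * Y))"
    by (simp only: assoc_mult_mat[OF cY cX J] assoc_mult_mat[OF cY QJ XY])
  also have "\<dots> = conj_transpose Y * ((conj_transpose X * J_form n * X) * Y)"
    by (simp only: assoc_mult_mat[OF QJ Xc Yc])
  also have "\<dots> = conj_transpose Y * (J_form n * Y)" unfolding eX ..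
  also have "\<dots> = J_form n" using assoc_mult_mat[OF cY J Yc] eY by simp
  finally have "conj_transpose Y * conj_transpose X * J_form n * (X * Y) = J_form n" .
  with e0 have "conj_transpose (X * Y) * J_form n * (X * Y) = J_form n" by simp
  thus ?thesis unfolding U_n1_def using XY by auto
qed

lemma U_eig_good:
  assumes X: "X \<in> U_n1 n" and eig: "X *\<^sub>v unit_vec (n+1) n = e \<cdot>\<^sub>v unit_vec (n+1) n"
    and e: "e \<noteq> 0" and c: "c \<noteq> 0"
  shows "good n (c \<cdot>\<^sub>m X) (c * e)"
proof -
  have Xc: "X \<in> carrier_mat (n+1) (n+1)" using X unfolding U_n1_def by auto
  note h = X[unfolded U_iff[OF Xc]]
  have split: "(\<Sum>i<n+1. cnj (X $$ (i,j)) * sg n i * X $$ (i,k)) =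
     (\<Sum>i<n. cnj (X $$ (i,j)) * X $$ (i,k)) - cnj (X $$ (n,j)) * X $$ (n,k)" for j k
    unfolding sum_split_last by simp
  have col: "X $$ (i,n) = e * unit_vec (n+1) n $ i" if i: "i < n+1" for i
  proof -
    have "X $$ (i,n) = (X *\<^sub>v unit_vec (n+1) n) $ i" by (rule mv_unit[OF Xc i, symmetric]) simp
    also have "\<dots> = e * unit_vec (n+1) n $ i" unfolding eig using i by simp
    finally show ?thesis .
  qed
  have c1: "\<forall>i<n. X $$ (i,n) = 0" using col by simp
  have d1: "X $$ (n,n) = e" using col[of n] by simp
  have r1: "\<forall>j<n. X $$ (n,j) = 0"
  proof (intro allI impI)
    fix j assume j: "j < n"
    have "(\<Sum>i<n+1. cnj (X $$ (i,j)) * sg n i * X $$ (i,n)) = 0" using h[rule_format, of j n] j by simp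
    hence "(\<Sum>i<n. cnj (X $$ (i,j)) * X $$ (i,n)) - cnj (X $$ (n,j)) * X $$ (n,n) = 0" unfolding split .
    hence "cnj (X $$ (n,j)) * e = 0" using c1 d1 by simp
    thus "X $$ (n,j) = 0" using e by simp
  qed
  have "(\<Sum>i<n+1. cnj (X $$ (i,n)) * sg n i * X $$ (i,n)) = -1" using h[rule_format, of n n] by simp
  hence "(\<Sum>i<n. cnj (X $$ (i,n)) * X $$ (i,n)) - cnj (X $$ (n,n)) * X $$ (n,n) = -1" unfolding split .
  hence ee: "cnj e * e = 1" using c1 d1 by simp
  have P: "(\<Sum>i<n. cnj (X $$ (i,j)) * X $$ (i,k)) = (if j = k then 1 else 0)" if j: "j < n" and k: "k < n" for j k
  proof -
    have "(\<Sum>i<n+1. cnj (X $$ (i,j)) * sg n i * X $$ (i,k)) = (if j = k then 1 else 0)"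
      using h[rule_format, of j k] j k by simp
    thus ?thesis unfolding split using r1 j k by simp
  qed
  have ce: "complex_of_real ((cmod (c * e))^2) = cnj c * c"
    unfolding cnorm_sq using ee by (simp add: algebra_simps)
  have Mc: "c \<cdot>\<^sub>m X \<in> carrier_mat (n+1) (n+1)" using Xc by simp
  show ?thesis unfolding good_def
  proof (intro conjI allI impI Mc)
    show "c * e \<noteq> 0" using c e by simp
    show "(c \<cdot>\<^sub>m X) $$ (i,n) = 0" if "i < n" for i using that c1 Xc by simp
    show "(c \<cdot>\<^sub>m X) $$ (n,j) = 0" if "j < n" for j using that r1 Xc by simp
    show "(c \<cdot>\<^sub>m X) $$ (n,n) = c * e" using d1 Xc by simp
    fix j k assume j: "j < n" and k: "k < n"
    have "(\<Sum>i<n. cnj ((c \<cdot>\<^sub>m X) $$ (i,j)) * (c \<cdot>\<^sub>m X) $$ (i,k)) = (\<Sum>i<n. cnj c * c * (cnj (X $$ (i,j)) * X $$ (i,k)))"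
      using Xc j k by (intro sum.cong) (auto simp: algebra_simps)
    also have "\<dots> = cnj c * c * (if j = k then 1 else 0)" unfolding sum_distrib_left[symmetric] P[OF j k] ..
    finally show "(\<Sum>i<n. cnj ((c \<cdot>\<^sub>m X) $$ (i,j)) * (c \<cdot>\<^sub>m X) $$ (i,k)) = (if j = k then complex_of_real ((cmod (c * e))^2) else 0)"
      unfolding ce by simp
  qed
qed

lemma inv_facts:
  assumes h: "h \<in> carrier_mat m m" and i: "is_inverse h hi"
  shows "hi \<in> carrier_mat m m" and "h * hi = 1\<^sub>m m" and "hi * h = 1\<^sub>m m"
proof -
  note ii = i[unfolded is_inverse_def]
  have dr: "dim_row h = m" using h by simp
  have a: "h * hi = 1\<^sub>m m" unfolding dr[symmetric] by (rule conjunct1[OF ii])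
  have b: "hi * h = 1\<^sub>m m" unfolding dr[symmetric] by (rule conjunct2[OF ii])
  show "h * hi = 1\<^sub>m m" "hi * h = 1\<^sub>m m" by (rule a, rule b)
  have "dim_row (hi * h) = m" unfolding b by (rule index_one_mat(2))
  hence r: "dim_row hi = m" by (simp only: index_mult_mat(2))
  have "dim_col (h * hi) = m" unfolding a by (rule index_one_mat(3))
  hence c: "dim_col hi = m" by (simp only: index_mult_mat(3))
  show "hi \<in> carrier_mat m m" using r c by (rule carrier_matI)
qed

lemma scaled_inv:
  assumes P: "P \<in> carrier_mat m m" and Q: "Q \<in> carrier_mat m m" and PQ: "P * Q = 1\<^sub>m m" and d: "(d::complex) \<noteq> 0"
  shows "(d \<cdot>\<^sub>m P) * ((1/d) \<cdot>\<^sub>m Q) = 1\<^sub>m m"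
proof -
  have "(d \<cdot>\<^sub>m P) * ((1/d) \<cdot>\<^sub>m Q) = d \<cdot>\<^sub>m (P * ((1/d) \<cdot>\<^sub>m Q))"
    by (rule mult_smult_assoc_mat[OF P smult_carrier_mat[OF Q]])
  also have "\<dots> = d \<cdot>\<^sub>m ((1/d) \<cdot>\<^sub>m (P * Q))" by (simp only: mult_smult_distrib[OF P Q])
  also have "\<dots> = 1\<^sub>m m" unfolding PQ
  proof (rule eq_matI)
    fix i j assume "i < dim_row (1\<^sub>m m :: complex mat)" "j < dim_col (1\<^sub>m m :: complex mat)"
    thus "(d \<cdot>\<^sub>m ((1/d) \<cdot>\<^sub>m 1\<^sub>m m)) $$ (i,j) = 1\<^sub>m m $$ (i,j)" using d by simp
  qed simp_all
  finally show ?thesis .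
qed

lemma nth_root_ex: "(w::complex) \<noteq> 0 \<Longrightarrow> \<exists>d. d \<noteq> 0 \<and> d ^ (m+1) = w"
proof -
  assume w: "w \<noteq> 0"
  define d where "d = exp (Ln w / of_nat (m+1))"
  have "d ^ (m+1) = exp (of_nat (m+1) * (Ln w / of_nat (m+1)))" unfolding d_def exp_of_nat_mult ..
  also have "\<dots> = exp (Ln w)"
  proof -
    have nz: "(of_nat (m+1) :: complex) \<noteq> 0" by (simp only: of_nat_eq_0_iff)
    show ?thesis by (simp only: times_divide_eq_right nonzero_mult_div_cancel_left[OF nz])
  qed
  also have "\<dots> = w" using w by simp
  finally have "d ^ (m+1) = w" .
  moreover have "d \<noteq> 0" unfolding d_def by simp
  ultimately show ?thesis by blast
qed

theorem mainTheorem12: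
  fixes n :: nat and \<gamma> :: "complex mat"
  assumes "n \<ge> 1" and "\<gamma> \<in> SL_mat (n+1)"
  shows "(\<exists>h \<in> SL_mat (n+1). \<exists>hi. is_inverse h hi \<and>
            (\<forall>r>0. mat_image (hi * \<gamma> * h) (Tset n r) = Tset n r))
         \<longleftrightarrow>
         (\<exists>g \<in> SL_mat (n+1). \<exists>gi. is_inverse g gi \<and> elliptic_PU n (gi * \<gamma> * g))"
proof
  have \<gamma>c: "\<gamma> \<in> carrier_mat (n+1) (n+1)" and d\<gamma>: "det \<gamma> = 1" using assms(2) unfolding SL_mat_def by auto
  assume "\<exists>h \<in> SL_mat (n+1). \<exists>hi. is_inverse h hi \<and> (\<forall>r>0. mat_image (hi * \<gamma> * h) (Tset n r) = Tset n r)"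
  then obtain h where hS: "h \<in> SL_mat (n+1)" and exh: "\<exists>hi. is_inverse h hi \<and> (\<forall>r>0. mat_image (hi * \<gamma> * h) (Tset n r) = Tset n r)" ..
  from exh obtain hi where hie: "is_inverse h hi \<and> (\<forall>r>0. mat_image (hi * \<gamma> * h) (Tset n r) = Tset n r)" ..
  note hi = conjunct1[OF hie] and pres = conjunct2[OF hie]
  have hc: "h \<in> carrier_mat (n+1) (n+1)" using hS unfolding SL_mat_def by auto
  note I = inv_facts[OF hc hi]
  have Mc: "hi * \<gamma> * h \<in> carrier_mat (n+1) (n+1)" by (rule mult_carrier_mat[OF mult_carrier_mat[OF I(1) \<gamma>c] hc])
  have "det (hi * \<gamma> * h) = det hi * det \<gamma> * det h"
    using I(1) \<gamma>c hc by (simp add: det_mult[of _ "n+1"])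
  also have "\<dots> = det (hi * h)" using d\<gamma> I(1) hc by (simp add: det_mult[of _ "n+1"])
  also have "\<dots> = 1" using I(3) by simp
  finally have dM: "det (hi * \<gamma> * h) \<noteq> 0" by simp
  have "elliptic_PU n (hi * \<gamma> * h)"
    by (rule good_elliptic[OF pres_good[OF assms(1) Mc dM pres]])
  thus "\<exists>g \<in> SL_mat (n+1). \<exists>gi. is_inverse g gi \<and> elliptic_PU n (gi * \<gamma> * g)"
    by (intro bexI[OF _ hS] exI[of _ hi] conjI[OF hi])
next
  have \<gamma>c: "\<gamma> \<in> carrier_mat (n+1) (n+1)" and d\<gamma>: "det \<gamma> = 1" using assms(2) unfolding SL_mat_def by auto
  assume "\<exists>g \<in> SL_mat (n+1). \<exists>gi. is_inverse g gi \<and> elliptic_PU n (gi * \<gamma> * g)"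
  then obtain g where gS: "g \<in> SL_mat (n+1)" and exg: "\<exists>gi. is_inverse g gi \<and> elliptic_PU n (gi * \<gamma> * g)" ..
  from exg obtain gi where gie: "is_inverse g gi \<and> elliptic_PU n (gi * \<gamma> * g)" ..
  note gi = conjunct1[OF gie] and ell = conjunct2[OF gie]
  have gc: "g \<in> carrier_mat (n+1) (n+1)" and dg: "det g = 1" using gS unfolding SL_mat_def by auto
  note I = inv_facts[OF gc gi]
  have "\<exists>A c. A \<in> U_n1 n \<and> c \<noteq> 0 \<and> gi * \<gamma> * g = c \<cdot>\<^sub>m A \<and>
      (\<exists>z \<in> ball_B n. \<exists>e. e \<noteq> 0 \<and> A *\<^sub>v z = e \<cdot>\<^sub>v z)" using ell unfolding elliptic_PU_def .
  then obtain A where "\<exists>c. A \<in> U_n1 n \<and> c \<noteq> 0 \<and> gi * \<gamma> * g = c \<cdot>\<^sub>m A \<and>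
      (\<exists>z \<in> ball_B n. \<exists>e. e \<noteq> 0 \<and> A *\<^sub>v z = e \<cdot>\<^sub>v z)" ..
  then obtain c where H1: "A \<in> U_n1 n \<and> c \<noteq> 0 \<and> gi * \<gamma> * g = c \<cdot>\<^sub>m A \<and>
      (\<exists>z \<in> ball_B n. \<exists>e. e \<noteq> 0 \<and> A *\<^sub>v z = e \<cdot>\<^sub>v z)" ..
  note AU = conjunct1[OF H1] and c = conjunct1[OF conjunct2[OF H1]]
    and Geq = conjunct1[OF conjunct2[OF conjunct2[OF H1]]] and ex = conjunct2[OF conjunct2[OF conjunct2[OF H1]]]
  from ex obtain z where zB: "z \<in> ball_B n" and ex2: "\<exists>e. e \<noteq> 0 \<and> A *\<^sub>v z = e \<cdot>\<^sub>v z" ..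
  from ex2 obtain e where eAz: "e \<noteq> 0 \<and> A *\<^sub>v z = e \<cdot>\<^sub>v z" ..
  note e = conjunct1[OF eAz] and Az = conjunct2[OF eAz]
  have Ac: "A \<in> carrier_mat (n+1) (n+1)" using AU unfolding U_n1_def by auto
  have zc: "z \<in> carrier_vec (n+1)" and hz: "hnorm_first n z < (cmod (z $ n))^2" using zB unfolding ball_B_def by auto
  have "hnorm_first n z \<ge> 0" unfolding hnorm_first_def by (rule sum_nonneg) simp
  hence zn: "z $ n \<noteq> 0" using hz by auto
  define v where "v i = z $ i / z $ n" for i
  have s: "(\<Sum>i<n. (cmod (v i))^2) < 1"
  proof -
    have "(\<Sum>i<n. (cmod (v i))^2) = hnorm_first n z / (cmod (z $ n))^2"
      unfolding v_def hnorm_first_def sum_divide_distrib by (simp add: norm_divide power_divide)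
    also have "\<dots> < 1" using hz zn by simp
    finally show ?thesis .
  qed
  have s': "(\<Sum>i<n. (cmod (- v i))^2) < 1" using s by simp
  define B where "B = bst n v"
  define Bi where "Bi = bst n (\<lambda>i. - v i)"
  have Bc: "B \<in> carrier_mat (n+1) (n+1)" and Bic: "Bi \<in> carrier_mat (n+1) (n+1)" unfolding B_def Bi_def by (rule bst_carrier)+
  have BiB: "Bi * B = 1\<^sub>m (n+1)" and BBi: "B * Bi = 1\<^sub>m (n+1)" unfolding B_def Bi_def using bst_inv[OF s] by auto
  have BU: "B \<in> U_n1 n" unfolding B_def by (rule bst_U[OF s])
  have BiU: "Bi \<in> U_n1 n" unfolding Bi_def by (rule bst_U[OF s'])
  let ?u = "unit_vec (n+1) n"
  let ?\<kappa> = "complex_of_real (bst_a n v) / z $ n"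
  have uc: "?u \<in> carrier_vec (n+1)" by simp
  have Bu: "B *\<^sub>v ?u = ?\<kappa> \<cdot>\<^sub>v z"
  proof (rule eq_vecI)
    fix i assume "i < dim_vec (?\<kappa> \<cdot>\<^sub>v z)"
    hence i: "i < n+1" using zc by simp
    have "(B *\<^sub>v ?u) $ i = B $$ (i,n)" by (rule mv_unit[OF Bc i]) simp
    moreover have "i < n \<or> i = n" using i by auto
    ultimately show "(B *\<^sub>v ?u) $ i = (?\<kappa> \<cdot>\<^sub>v z) $ i"
      using i zc zn unfolding B_def bst_def v_def by auto
  qed (use Bc zc in simp)
  define A' where "A' = Bi * A * B"
  have A'U: "A' \<in> U_n1 n" unfolding A'_def by (rule U_mult[OF U_mult[OF BiU AU] BU])
  have A'c: "A' \<in> carrier_mat (n+1) (n+1)" unfolding A'_def using Bic Ac Bc by simp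
  have "A *\<^sub>v (B *\<^sub>v ?u) = e \<cdot>\<^sub>v (B *\<^sub>v ?u)"
    unfolding Bu mult_mat_vec[OF Ac zc] Az smult_smult_assoc by (simp add: mult.commute)
  moreover have "A' *\<^sub>v ?u = Bi *\<^sub>v (A *\<^sub>v (B *\<^sub>v ?u))"
  proof -
    have BiA: "Bi * A \<in> carrier_mat (n+1) (n+1)" using Bic Ac by simp
    have Buc: "B *\<^sub>v ?u \<in> carrier_vec (n+1)" using Bc uc by simp
    show ?thesis unfolding A'_def assoc_mult_mat_vec[OF BiA Bc uc] assoc_mult_mat_vec[OF Bic Ac Buc] ..
  qed
  ultimately have "A' *\<^sub>v ?u = Bi *\<^sub>v (e \<cdot>\<^sub>v (B *\<^sub>v ?u))" by simp
  also have "\<dots> = e \<cdot>\<^sub>v (Bi *\<^sub>v (B *\<^sub>v ?u))"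
    by (rule mult_mat_vec[OF Bic]) (use Bc uc in simp)
  also have "Bi *\<^sub>v (B *\<^sub>v ?u) = ?u"
    using Bic Bc uc BiB by (simp add: assoc_mult_mat_vec[symmetric, of _ "n+1" "n+1"])
  finally have A'u: "A' *\<^sub>v ?u = e \<cdot>\<^sub>v ?u" .
  have gd: "good n (c \<cdot>\<^sub>m A') (c * e)" by (rule U_eig_good[OF A'U A'u e c])
  have presM: "\<forall>r>0. mat_image (c \<cdot>\<^sub>m A') (Tset n r) = Tset n r" by (rule good_preserves[OF gd])
  have "det Bi * det B = 1" using det_mult[OF Bic Bc] BiB by simp
  hence dB: "det B \<noteq> 0" by auto
  obtain d where d0: "d \<noteq> 0" and dd: "d ^ (n+1) = 1 / det B" using nth_root_ex[of "1 / det B" n] dB by auto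
  define P where "P = (1/d) \<cdot>\<^sub>m Bi"
  define Q where "Q = d \<cdot>\<^sub>m B"
  have Pc: "P \<in> carrier_mat (n+1) (n+1)" unfolding P_def using Bic by simp
  have Qc: "Q \<in> carrier_mat (n+1) (n+1)" unfolding Q_def using Bc by simp
  have QP: "Q * P = 1\<^sub>m (n+1)" unfolding Q_def P_def by (rule scaled_inv[OF Bc Bic BBi d0])
  have PQ: "P * Q = 1\<^sub>m (n+1)" using scaled_inv[OF Bic Bc BiB, of "1/d"] d0 unfolding P_def Q_def by simp
  define H where "H = g * Q"
  define Hi where "Hi = P * gi"
  have Hc: "H \<in> carrier_mat (n+1) (n+1)" unfolding H_def using gc Qc by simp
  have Hic: "Hi \<in> carrier_mat (n+1) (n+1)" unfolding Hi_def using Pc I(1) by simp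
  have "det H = det g * det Q" unfolding H_def by (rule det_mult[OF gc Qc])
  also have "\<dots> = d ^ (n+1) * det B" unfolding Q_def dg using Bc by simp
  also have "\<dots> = 1" unfolding dd using dB by simp
  finally have HS: "H \<in> SL_mat (n+1)" unfolding SL_mat_def using Hc by simp
  have PG: "P * gi \<in> carrier_mat (n+1) (n+1)" using Pc I(1) by simp
  have GQ: "g * Q \<in> carrier_mat (n+1) (n+1)" using gc Qc by simp
  have Gg: "gi * \<gamma> \<in> carrier_mat (n+1) (n+1)" using I(1) \<gamma>c by simp
  have "H * Hi = g * (Q * (P * gi))" unfolding H_def Hi_def by (rule assoc_mult_mat[OF gc Qc PG])
  also have "\<dots> = g * gi" unfolding assoc_mult_mat[OF Qc Pc I(1), symmetric] QP using I(1) by simp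
  finally have HHi: "H * Hi = 1\<^sub>m (n+1)" using I(2) by simp
  have "Hi * H = P * (gi * (g * Q))" unfolding H_def Hi_def by (rule assoc_mult_mat[OF Pc I(1) GQ])
  also have "\<dots> = P * Q" unfolding assoc_mult_mat[OF I(1) gc Qc, symmetric] I(3) using Qc by simp
  finally have HiH: "Hi * H = 1\<^sub>m (n+1)" using PQ by simp
  have inv: "is_inverse H Hi" unfolding is_inverse_def using HHi HiH Hc by simp
  have "Hi * \<gamma> * H = P * ((gi * \<gamma> * g) * Q)"
    unfolding H_def Hi_def assoc_mult_mat[OF Pc I(1) \<gamma>c] assoc_mult_mat[OF Pc Gg GQ]
      assoc_mult_mat[OF Gg gc Qc, symmetric] ..
  also have "\<dots> = P * ((c \<cdot>\<^sub>m A) * Q)" unfolding Geq ..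
  also have "\<dots> = c \<cdot>\<^sub>m A'"
  proof -
    have ABc: "A * B \<in> carrier_mat (n+1) (n+1)" using Ac Bc by simp
    have dABc: "d \<cdot>\<^sub>m (A * B) \<in> carrier_mat (n+1) (n+1)" using ABc by simp
    have cdABc: "c \<cdot>\<^sub>m (d \<cdot>\<^sub>m (A * B)) \<in> carrier_mat (n+1) (n+1)" using ABc by simp
    have cAQ: "(c \<cdot>\<^sub>m A) * Q = c \<cdot>\<^sub>m (d \<cdot>\<^sub>m (A * B))"
      unfolding Q_def mult_smult_assoc_mat[OF Ac smult_carrier_mat[OF Bc]] mult_smult_distrib[OF Ac Bc] ..
    have "P * ((c \<cdot>\<^sub>m A) * Q) = (1/d) \<cdot>\<^sub>m (c \<cdot>\<^sub>m (d \<cdot>\<^sub>m (Bi * (A * B))))"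
      unfolding P_def cAQ mult_smult_assoc_mat[OF Bic cdABc] mult_smult_distrib[OF Bic dABc]
        mult_smult_distrib[OF Bic ABc] ..
    also have "\<dots> = c \<cdot>\<^sub>m A'"
      unfolding A'_def assoc_mult_mat[OF Bic Ac Bc] using ABc Bic d0 by (intro eq_matI) auto
    finally show ?thesis .
  qed
  finally have HG: "Hi * \<gamma> * H = c \<cdot>\<^sub>m A'" .
  have pr: "\<forall>r>0. mat_image (Hi * \<gamma> * H) (Tset n r) = Tset n r" unfolding HG by (rule presM)
  show "\<exists>h \<in> SL_mat (n+1). \<exists>hi. is_inverse h hi \<and> (\<forall>r>0. mat_image (hi * \<gamma> * h) (Tset n r) = Tset n r)"
    by (rule bexI[OF _ HS], rule exI[of _ Hi], rule conjI[OF inv pr])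
qed

end
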